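(* Let $\mathrm{V}=\{1,\dots,n\}$ with $n=r_1r_2\cdots r_k$ for integers $k\ge2$ and $r_1,\dots,r_k\ge2$. Then there exist a graph $\mathrm{G}$ on $\mathrm{V}$, a clique coverage of $\mathrm{G}$ whose cliques have sizes in $\{r_1,\dots,r_k\}$, and a sequence of $\sum_{i=1}^k\prod_{j\ne i}r_j$ cliques from it, along which the clique-gossip averaging algorithm satisfies $\mathbf{x}(T)=\big(\frac1n\sum_j\mathbf{x}_j(0)\big)\mathbf{1}$ with $T=\sum_{i=1}^k\prod_{j\ne i}r_j$, for every initial value $\mathbf{x}(0)\in\mathbb{R}^n$.
   Context: A clique of a simple undirected graph $\mathrm{G}$ on $\mathrm{V}$ is a vertex subset inducing a complete subgraph; a clique coverage is a finite set of cliques whose union is $\mathrm{V}$ and whose union of induced subgraphs is connected. The clique-gossip averaging algorithm along a sequence of cliques $\mathrm{Q}_0,\mathrm{Q}_1,\dots$ acts on $\mathbf{x}(t)\in\mathbb{R}^n$ by $\mathbf{x}_i(t+1)=\frac{1}{|\mathrm{Q}_t|}\sum_{j\in\mathrm{Q}_t}\mathbf{x}_j(t)$ if $i\in\mathrm{Q}_t$ and $\mathbf{x}_i(t+1)=\mathbf{x}_i(t)$ otherwise. $\mathbf{1}$ is the all-ones vector. *)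

theory Defs
  imports "HOL-Analysis.Analysis"
begin

definition simple_graph :: "nat set \<Rightarrow> (nat \<Rightarrow> nat \<Rightarrow> bool) \<Rightarrow> bool" where
  "simple_graph V E \<longleftrightarrow> (\<forall>u v. E u v \<longrightarrow> u \<in> V \<and> v \<in> V \<and> u \<noteq> v \<and> E v u)"

definition is_clique :: "nat set \<Rightarrow> (nat \<Rightarrow> nat \<Rightarrow> bool) \<Rightarrow> nat set \<Rightarrow> bool" where
  "is_clique V E Q \<longleftrightarrow> Q \<subseteq> V \<and> (\<forall>u\<in>Q. \<forall>v\<in>Q. u \<noteq> v \<longrightarrow> E u v)"

definition cover_edge :: "(nat \<Rightarrow> nat \<Rightarrow> bool) \<Rightarrow> nat set set \<Rightarrow> nat \<Rightarrow> nat \<Rightarrow> bool" where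
  "cover_edge E C u v \<longleftrightarrow> (\<exists>Q\<in>C. u \<in> Q \<and> v \<in> Q \<and> E u v)"

definition clique_coverage :: "nat set \<Rightarrow> (nat \<Rightarrow> nat \<Rightarrow> bool) \<Rightarrow> nat set set \<Rightarrow> bool" where
  "clique_coverage V E C \<longleftrightarrow> finite C \<and> (\<forall>Q\<in>C. is_clique V E Q) \<and> \<Union>C = V \<and>
     (\<forall>u\<in>V. \<forall>v\<in>V. (cover_edge E C)\<^sup>*\<^sup>* u v)"

definition gossip_step :: "nat set \<Rightarrow> (nat \<Rightarrow> real) \<Rightarrow> (nat \<Rightarrow> real)" where
  "gossip_step Q x = (\<lambda>i. if i \<in> Q then (\<Sum>j\<in>Q. x j) / real (card Q) else x i)"

fun gossip :: "(nat \<Rightarrow> nat set) \<Rightarrow> (nat \<Rightarrow> real) \<Rightarrow> nat \<Rightarrow> (nat \<Rightarrow> real)" where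
  "gossip Qs x0 0 = x0"
| "gossip Qs x0 (Suc t) = gossip_step (Qs t) (gossip Qs x0 t)"

end

theory Submission
  imports Defs
begin

lemma frame: "(\<forall>Q\<in>set qs. i \<notin> Q) \<Longrightarrow> fold gossip_step qs x i = x i"
  by (induction qs arbitrary: x) (auto simp: gossip_step_def)

lemma blocks:
  assumes sub: "\<forall>c<N. \<forall>Q\<in>set (qs c). Q \<subseteq> B c"
    and spec: "\<forall>c<N. \<forall>x. \<forall>i\<in>B c. fold gossip_step (qs c) x i = sum x (B c) / real (card (B c))"
    and disj: "\<forall>c<N. \<forall>c'<N. c \<noteq> c' \<longrightarrow> B c \<inter> B c' = {}"
  shows "(\<forall>c<N. i \<in> B c \<longrightarrow> fold gossip_step (concat (map qs [0..<N])) x i = sum x (B c) / real (card (B c)))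
     \<and> ((\<forall>c<N. i \<notin> B c) \<longrightarrow> fold gossip_step (concat (map qs [0..<N])) x i = x i)"
  using assms
proof (induction N arbitrary: i)
  case 0
  then show ?case by simp
next
  case (Suc N)
  define y where "y = fold gossip_step (concat (map qs [0..<N])) x"
  have IH: "\<And>i. (\<forall>c<N. i \<in> B c \<longrightarrow> y i = sum x (B c) / real (card (B c)))
     \<and> ((\<forall>c<N. i \<notin> B c) \<longrightarrow> y i = x i)"
    unfolding y_def using Suc.IH Suc.prems by auto
  have eq: "fold gossip_step (concat (map qs [0..<Suc N])) x = fold gossip_step (qs N) y"
    by (simp add: y_def)
  have fr: "\<And>j. j \<notin> B N \<Longrightarrow> fold gossip_step (qs N) y j = y j"
    using Suc.prems(1) by (intro frame) auto
  have yB: "\<And>j. j \<in> B N \<Longrightarrow> y j = x j"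
    using IH Suc.prems(3) by (metis disjoint_iff less_Suc_eq nat_neq_iff)
  have "sum y (B N) = sum x (B N)" using yB by (rule sum.cong[OF refl])
  then have sN: "\<And>j. j \<in> B N \<Longrightarrow> fold gossip_step (qs N) y j = sum x (B N) / real (card (B N))"
    using Suc.prems(2) by auto
  show ?case
  proof (intro conjI allI impI)
    fix c assume c: "c < Suc N" "i \<in> B c"
    show "fold gossip_step (concat (map qs [0..<Suc N])) x i = sum x (B c) / real (card (B c))"
    proof (cases "c = N")
      case True then show ?thesis using sN c eq by simp
    next
      case False
      then have "i \<notin> B N" using c Suc.prems(3) by (metis disjoint_iff lessI)
      then show ?thesis using eq fr IH c False by auto
    qed
  next
    assume "\<forall>c<Suc N. i \<notin> B c"
    then show "fold gossip_step (concat (map qs [0..<Suc N])) x i = x i"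
      using eq fr IH by auto
  qed
qed

lemma invariance:
  assumes "\<forall>Q\<in>set qs. Q \<subseteq> S \<or> Q \<inter> S = {}" "finite S"
  shows "sum (fold gossip_step qs x) S = sum x S"
  using assms
proof (induction qs arbitrary: x)
  case Nil then show ?case by simp
next
  case (Cons Q qs)
  have "sum (gossip_step Q x) S = sum x S"
  proof (cases "Q \<subseteq> S")
    case True
    have fQ: "finite Q" using True Cons.prems(2) finite_subset by blast
    have "sum (gossip_step Q x) S = sum (gossip_step Q x) Q + sum (gossip_step Q x) (S - Q)"
      using True Cons.prems(2) by (metis sum.subset_diff add.commute)
    also have "sum (gossip_step Q x) Q = sum x Q"
    proof (cases "Q = {}")
      case False
      then have "card Q > 0" using fQ by (simp add: card_gt_0_iff)
      then show ?thesis by (simp add: gossip_step_def)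
    qed simp
    also have "sum (gossip_step Q x) (S - Q) = sum x (S - Q)"
      by (rule sum.cong) (auto simp: gossip_step_def)
    finally show ?thesis
      using True Cons.prems(2) by (metis sum.subset_diff add.commute)
  next
    case False
    then have "Q \<inter> S = {}" using Cons.prems(1) by auto
    then show ?thesis by (intro sum.cong) (auto simp: gossip_step_def)
  qed
  then show ?case using Cons by simp
qed


lemma Lsucc:
  fixes r :: "nat \<Rightarrow> nat"
  shows "(\<Sum>i=1..Suc k. \<Prod>j\<in>{1..Suc k}-{i}. r j)
   = r (Suc k) * (\<Sum>i=1..k. \<Prod>j\<in>{1..k}-{i}. r j) + (\<Prod>i=1..k. r i)"
proof -
  have s: "{1..Suc k} = insert (Suc k) {1..k}" by auto
  have e1: "(\<Sum>i=1..Suc k. \<Prod>j\<in>{1..Suc k}-{i}. r j)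
      = (\<Prod>j\<in>{1..Suc k}-{Suc k}. r j) + (\<Sum>i=1..k. \<Prod>j\<in>{1..Suc k}-{i}. r j)"
    unfolding s by (subst sum.insert) auto
  have "{1..Suc k}-{Suc k} = {1..k}" by auto
  then have e2: "(\<Prod>j\<in>{1..Suc k}-{Suc k}. r j) = (\<Prod>i=1..k. r i)" by simp
  have e3: "(\<Sum>i=1..k. \<Prod>j\<in>{1..Suc k}-{i}. r j) = (\<Sum>i=1..k. r (Suc k) * (\<Prod>j\<in>{1..k}-{i}. r j))"
  proof (rule sum.cong[OF refl])
    fix i assume "i \<in> {1..k}"
    then have "{1..Suc k}-{i} = insert (Suc k) ({1..k}-{i})" by auto
    then show "(\<Prod>j\<in>{1..Suc k}-{i}. r j) = r (Suc k) * (\<Prod>j\<in>{1..k}-{i}. r j)" by simp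
  qed
  have e4: "r (Suc k) * (\<Sum>i=1..k. \<Prod>j\<in>{1..k}-{i}. r j) = (\<Sum>i=1..k. r (Suc k) * (\<Prod>j\<in>{1..k}-{i}. r j))"
    by (simp add: sum_distrib_left)
  show ?thesis unfolding e1 e2 e3 e4 by (rule add.commute)
qed

lemma core:
  fixes k :: nat and r :: "nat \<Rightarrow> nat"
  shows "(\<forall>i\<in>{1..k}. r i > 0) \<Longrightarrow> \<forall>A. finite A \<longrightarrow> card A = (\<Prod>i=1..k. r i) \<longrightarrow>
    (\<exists>qs. length qs = (\<Sum>i=1..k. \<Prod>j\<in>{1..k}-{i}. r j) \<and>
      (\<forall>Q\<in>set qs. Q \<subseteq> A \<and> card Q \<in> r ` {1..k}) \<and>
      (\<forall>x. \<forall>i\<in>A. fold gossip_step qs x i = sum x A / real (card A)))"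
proof (induction k)
  case 0
  show ?case
  proof (intro allI impI)
    fix A :: "nat set" assume "finite A" "card A = (\<Prod>i=1..0. r i)"
    then obtain a where "A = {a}" by (auto simp: card_Suc_eq)
    then show "\<exists>qs. length qs = (\<Sum>i=1..0. \<Prod>j\<in>{1..0}-{i}. r j) \<and>
      (\<forall>Q\<in>set qs. Q \<subseteq> A \<and> card Q \<in> r ` {1..0}) \<and>
      (\<forall>x. \<forall>i\<in>A. fold gossip_step qs x i = sum x A / real (card A))"
      by (intro exI[of _ "[]"]) auto
  qed
next
  case (Suc k)
  define a where "a = r (Suc k)"
  define m where "m = (\<Prod>i=1..k. r i)"
  have a0: "a > 0" using Suc.prems a_def by auto
  have m0: "m > 0" using Suc.prems m_def by (simp add: prod_pos)
  have IH: "\<forall>A. finite A \<longrightarrow> card A = m \<longrightarrow>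
    (\<exists>qs. length qs = (\<Sum>i=1..k. \<Prod>j\<in>{1..k}-{i}. r j) \<and>
      (\<forall>Q\<in>set qs. Q \<subseteq> A \<and> card Q \<in> r ` {1..k}) \<and>
      (\<forall>x. \<forall>i\<in>A. fold gossip_step qs x i = sum x A / real (card A)))"
    using Suc.IH Suc.prems m_def by auto
  have pSuc: "(\<Prod>i=1..Suc k. r i) = m * a" by (simp add: m_def a_def)
  show ?case
  proof (intro allI impI)
    fix A :: "nat set" assume fA: "finite A" and cA: "card A = (\<Prod>i=1..Suc k. r i)"
    have "card ({..<a} \<times> {..<m}) = card A" using cA pSuc by (simp add: card_cartesian_product)
    then obtain f where bij: "bij_betw f ({..<a} \<times> {..<m}) A"
      using fA bij_betw_iff_card[of "{..<a} \<times> {..<m}" A] by auto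
    have inj: "inj_on f ({..<a} \<times> {..<m})" and fim: "f ` ({..<a} \<times> {..<m}) = A"
      using bij by (auto simp: bij_betw_def)
    define B where "B c = (\<lambda>j. f (c, j)) ` {..<m}" for c
    define D where "D j = (\<lambda>c. f (c, j)) ` {..<a}" for j
    have injB: "inj_on (\<lambda>j. f (c, j)) {..<m}" if "c < a" for c
      using inj that by (auto simp: inj_on_def)
    have injD: "inj_on (\<lambda>c. f (c, j)) {..<a}" if "j < m" for j
      using inj that by (auto simp: inj_on_def)
    have cardB: "card (B c) = m" if "c < a" for c
      using card_image[OF injB[OF that]] by (simp add: B_def)
    have cardD: "card (D j) = a" if "j < m" for j
      using card_image[OF injD[OF that]] by (simp add: D_def)
    have BA: "B c \<subseteq> A" if "c < a" for c using fim that by (auto simp: B_def)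
    have DA: "D j \<subseteq> A" if "j < m" for j using fim that by (auto simp: D_def)
    have disjB: "\<forall>c<a. \<forall>c'<a. c \<noteq> c' \<longrightarrow> B c \<inter> B c' = {}"
      using inj by (auto simp: B_def inj_on_def)
    have disjD: "\<forall>j<m. \<forall>j'<m. j \<noteq> j' \<longrightarrow> D j \<inter> D j' = {}"
      using inj by (auto simp: D_def inj_on_def)
    have "\<forall>c. \<exists>q. c < a \<longrightarrow> length q = (\<Sum>i=1..k. \<Prod>j\<in>{1..k}-{i}. r j) \<and>
      (\<forall>Q\<in>set q. Q \<subseteq> B c \<and> card Q \<in> r ` {1..k}) \<and>
      (\<forall>x. \<forall>i\<in>B c. fold gossip_step q x i = sum x (B c) / real (card (B c)))"
    proof
      fix c
      show "\<exists>q. c < a \<longrightarrow> length q = (\<Sum>i=1..k. \<Prod>j\<in>{1..k}-{i}. r j) \<and>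
      (\<forall>Q\<in>set q. Q \<subseteq> B c \<and> card Q \<in> r ` {1..k}) \<and>
      (\<forall>x. \<forall>i\<in>B c. fold gossip_step q x i = sum x (B c) / real (card (B c)))"
      proof (cases "c < a")
        case True
        have "finite (B c)" by (simp add: B_def)
        then show ?thesis using IH cardB[OF True] by blast
      qed simp
    qed
    then obtain qf where qf: "\<And>c. c < a \<Longrightarrow> length (qf c) = (\<Sum>i=1..k. \<Prod>j\<in>{1..k}-{i}. r j) \<and>
      (\<forall>Q\<in>set (qf c). Q \<subseteq> B c \<and> card Q \<in> r ` {1..k}) \<and>
      (\<forall>x. \<forall>i\<in>B c. fold gossip_step (qf c) x i = sum x (B c) / real (card (B c)))"
      by metis
    define qs1 where "qs1 = concat (map qf [0..<a])"
    define qs2 where "qs2 = map D [0..<m]"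
    show "\<exists>qs. length qs = (\<Sum>i=1..Suc k. \<Prod>j\<in>{1..Suc k}-{i}. r j) \<and>
      (\<forall>Q\<in>set qs. Q \<subseteq> A \<and> card Q \<in> r ` {1..Suc k}) \<and>
      (\<forall>x. \<forall>i\<in>A. fold gossip_step qs x i = sum x A / real (card A))"
    proof (intro exI[of _ "qs1 @ qs2"] conjI)
      have "length qs1 = a * (\<Sum>i=1..k. \<Prod>j\<in>{1..k}-{i}. r j)"
      proof -
        have h: "map (length \<circ> qf) [0..<a] = map (\<lambda>_. (\<Sum>i=1..k. \<Prod>j\<in>{1..k}-{i}. r j)) [0..<a]"
          using qf by (intro map_cong) auto
        show ?thesis unfolding qs1_def length_concat map_map h by (simp add: sum_list_triv)
      qed
      then show "length (qs1 @ qs2) = (\<Sum>i=1..Suc k. \<Prod>j\<in>{1..Suc k}-{i}. r j)"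
        unfolding Lsucc length_append qs2_def length_map length_upt a_def m_def by simp
    next
      show "\<forall>Q\<in>set (qs1 @ qs2). Q \<subseteq> A \<and> card Q \<in> r ` {1..Suc k}"
      proof
      fix Q assume "Q \<in> set (qs1 @ qs2)"
      then consider "Q \<in> set qs1" | "Q \<in> set qs2" by auto
      then show "Q \<subseteq> A \<and> card Q \<in> r ` {1..Suc k}"
      proof cases
        assume "Q \<in> set qs1"
        then obtain c where "c < a" "Q \<in> set (qf c)" by (auto simp: qs1_def)
        then show ?thesis using qf BA by fastforce
      next
        assume "Q \<in> set qs2"
        then obtain j where "j < m" "Q = D j" by (auto simp: qs2_def)
        then show ?thesis using cardD DA a_def by auto
      qed
      qed
    next
      show "\<forall>x. \<forall>i\<in>A. fold gossip_step (qs1 @ qs2) x i = sum x A / real (card A)"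
      proof (intro allI ballI)
      fix x i assume iA: "i \<in> A"
      define y where "y = fold gossip_step qs1 x"
      have yv: "y (f (c, j)) = sum x (B c) / real m" if "c < a" "j < m" for c j
      proof -
        have "f (c, j) \<in> B c" using that by (auto simp: B_def)
        then show ?thesis
          using blocks[of a qf B "f (c,j)" x] qf disjB that cardB unfolding y_def qs1_def
          by auto
      qed
      obtain c j where cj: "c < a" "j < m" "i = f (c, j)" using iA fim by auto
      have "fold gossip_step (qs1 @ qs2) x i = fold gossip_step qs2 y i" by (simp add: y_def)
      also have "\<dots> = sum y (D j) / real a"
      proof -
        have "i \<in> D j" using cj by (auto simp: D_def)
        then show ?thesis
          using blocks[of m "\<lambda>j. [D j]" D i y] disjD cj cardD
          unfolding qs2_def by (auto simp: gossip_step_def concat_map_singleton)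
      qed
      also have "sum y (D j) = (\<Sum>c'<a. sum x (B c') / real m)"
        unfolding D_def using sum.reindex[OF injD[OF cj(2)], of y] yv cj(2) by simp
      also have "(\<Sum>c'<a. sum x (B c')) = sum x A"
      proof -
        have "sum x A = sum (x \<circ> f) ({..<a} \<times> {..<m})"
          using sum.reindex[OF inj, of x] fim by simp
        also have "\<dots> = (\<Sum>c'<a. \<Sum>j'<m. x (f (c', j')))"
          by (simp add: sum.cartesian_product)
        also have "\<dots> = (\<Sum>c'<a. sum x (B c'))"
        proof (rule sum.cong[OF refl])
          fix c' assume "c' \<in> {..<a}"
          then show "(\<Sum>j'<m. x (f (c', j'))) = sum x (B c')"
            unfolding B_def using sum.reindex[OF injB, of c' x] by simp
        qed
        finally show ?thesis by simp
      qed
      then have "(\<Sum>c'<a. sum x (B c') / real m) = sum x A / real m"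
        by (simp add: sum_divide_distrib[symmetric])
      finally show "fold gossip_step (qs1 @ qs2) x i = sum x A / real (card A)"
        using cA pSuc by simp
      qed
    qed
  qed
qed


lemma gossip_fold: "t \<le> length qs \<Longrightarrow> gossip (\<lambda>t. qs ! t) x0 t = fold gossip_step (take t qs) x0"
proof (induction t)
  case 0 then show ?case by simp
next
  case (Suc t)
  then have "take (Suc t) qs = take t qs @ [qs ! t]" by (simp add: take_Suc_conv_app_nth)
  then show ?case using Suc by simp
qed

theorem mainTheorem8:
  fixes k :: nat and r :: "nat \<Rightarrow> nat" and n :: nat
  assumes "k \<ge> 2"
    and "\<forall>i\<in>{1..k}. r i \<ge> 2"
    and "n = (\<Prod>i=1..k. r i)"
  shows "\<exists>E C Qs. simple_graph {1..n} E \<and> clique_coverage {1..n} E C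
     \<and> (\<forall>Q\<in>C. card Q \<in> r ` {1..k})
     \<and> (\<forall>t < (\<Sum>i=1..k. \<Prod>j\<in>{1..k}-{i}. r j). Qs t \<in> C)
     \<and> (\<forall>x0 :: nat \<Rightarrow> real. \<forall>i\<in>{1..n}.
          gossip Qs x0 (\<Sum>i=1..k. \<Prod>j\<in>{1..k}-{i}. r j) i
            = (\<Sum>j=1..n. x0 j) / real n)"
proof -
  define T where "T = (\<Sum>i=1..k. \<Prod>j\<in>{1..k}-{i}. r j)"
  define V where "V = {1..n}"
  have pos: "\<forall>i\<in>{1..k}. r i > 0" using assms(2) by fastforce
  have cV: "card V = n" "finite V" by (auto simp: V_def)
  obtain qs where len: "length qs = T" and sub: "\<forall>Q\<in>set qs. Q \<subseteq> V \<and> card Q \<in> r ` {1..k}"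
    and avg: "\<forall>x. \<forall>i\<in>V. fold gossip_step qs x i = sum x V / real n"
    using core[of k r] pos cV assms(3) unfolding T_def by metis
  have "(\<Prod>i=1..k. (2::nat)) \<le> (\<Prod>i=1..k. r i)" using assms(2) by (intro prod_mono) auto
  then have "2 ^ k \<le> n" using assms(3) by simp
  moreover have "(2::nat) ^ 2 \<le> 2 ^ k" using assms(1) by (intro power_increasing) auto
  ultimately have n2: "n \<ge> 2" by simp
  define C where "C = set qs"
  define E where "E u v = (u \<noteq> v \<and> (\<exists>Q\<in>C. u \<in> Q \<and> v \<in> Q))" for u v
  define Qs where "Qs = (\<lambda>t. qs ! t)"
  have closed: "S = V" if S: "S \<subseteq> V" "S \<noteq> {}" "\<forall>Q\<in>C. Q \<subseteq> S \<or> Q \<inter> S = {}" for S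
  proof -
    define x0 where "x0 = (\<lambda>j. if j \<in> S then 1 else 0 :: real)"
    have fS: "finite S" using S cV finite_subset by blast
    have sV: "sum x0 V = real (card S)"
    proof -
      have "sum x0 V = sum x0 S + sum x0 (V - S)" using S cV by (metis sum.subset_diff add.commute)
      then show ?thesis by (simp add: x0_def)
    qed
    have "sum (fold gossip_step qs x0) S = sum x0 S"
      using invariance[of qs S x0] S fS by (auto simp: C_def)
    also have "\<dots> = real (card S)" by (simp add: x0_def)
    finally have e1: "sum (fold gossip_step qs x0) S = real (card S)" .
    have "sum (fold gossip_step qs x0) S = (\<Sum>i\<in>S. real (card S) / real n)"
      using avg sV S by (intro sum.cong) auto
    then have "real (card S) * real (card S) / real n = real (card S)" using e1 by simp
    moreover have "card S > 0" using S fS by (simp add: card_gt_0_iff)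
    ultimately have "real (card S) = real n" using n2
      by (simp add: field_simps)
    then have "card S = card V" using cV by simp
    then show ?thesis using S cV card_subset_eq by blast
  qed
  have sg: "simple_graph V E" using sub unfolding simple_graph_def E_def C_def by blast
  have cov: "\<Union>C = V"
  proof
    show "\<Union>C \<subseteq> V" using sub C_def by auto
    show "V \<subseteq> \<Union>C"
    proof
      fix v assume v: "v \<in> V"
      show "v \<in> \<Union>C"
      proof (rule ccontr)
        assume "v \<notin> \<Union>C"
        then have "{v} = V" using closed[of "{v}"] v by auto
        then show False using cV n2 by (metis card.empty card_insert_disjoint empty_iff finite.intros(1) numeral_le_one_iff semiring_norm(69) One_nat_def)
      qed
    qed
  qed
  have conn: "\<forall>u\<in>V. \<forall>v\<in>V. (cover_edge E C)\<^sup>*\<^sup>* u v"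
  proof (intro ballI)
    fix u v assume u: "u \<in> V" and v: "v \<in> V"
    define S where "S = {w \<in> V. (cover_edge E C)\<^sup>*\<^sup>* u w}"
    have "S = V"
    proof (rule closed)
      show "S \<subseteq> V" by (auto simp: S_def)
      show "S \<noteq> {}" using u by (auto simp: S_def)
      show "\<forall>Q\<in>C. Q \<subseteq> S \<or> Q \<inter> S = {}"
      proof
        fix Q assume Q: "Q \<in> C"
        show "Q \<subseteq> S \<or> Q \<inter> S = {}"
        proof (cases "Q \<inter> S = {}")
          case False
          then obtain a where a: "a \<in> Q" "a \<in> S" by auto
          have "Q \<subseteq> S"
          proof
            fix b assume b: "b \<in> Q"
            have bV: "b \<in> V" using b Q sub C_def by auto
            show "b \<in> S"
            proof (cases "a = b")
              case True then show ?thesis using a by simp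
            next
              case False
              then have "cover_edge E C a b" using a b Q unfolding cover_edge_def E_def by blast
              then have "(cover_edge E C)\<^sup>*\<^sup>* u b" using a(2) unfolding S_def
                by (auto intro: rtranclp.rtrancl_into_rtrancl)
              then show ?thesis using bV by (simp add: S_def)
            qed
          qed
          then show ?thesis by simp
        qed simp
      qed
    qed
    then show "(cover_edge E C)\<^sup>*\<^sup>* u v" using v by (auto simp: S_def)
  qed
  have cc: "clique_coverage V E C"
    unfolding clique_coverage_def is_clique_def using cov conn sub
    by (auto simp: C_def E_def)
  have g: "\<forall>x0 :: nat \<Rightarrow> real. \<forall>i\<in>V. gossip Qs x0 T i = sum x0 V / real n"
    using avg gossip_fold[of T qs] len unfolding Qs_def by simp
  show ?thesis
    apply (rule exI[of _ E], rule exI[of _ C], rule exI[of _ Qs])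
    using sg cc sub g len unfolding V_def[symmetric] T_def[symmetric]
    by (auto simp: C_def Qs_def)
qed

end
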